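(* Suppose Assumptions 1–6 hold and Condition M1 holds, i.e. $\lim_{n\to\infty}M_n/m_n^{**}=0$. Then $\Delta_n=o\{R_n(m_n^* )\}$, i.e. $R_n(\mathbf w_n^* )/R_n(m_n^* )\to1$.
   Context: Setting. For each sample size $n$ one observes $\mathbf y=\boldsymbol\mu+\boldsymbol\varepsilon\in\mathbb R^n$ with $\boldsymbol\mu=\mathbf X\boldsymbol\beta$, where $\mathbf X=(x_{ij})$ is a nonstochastic $n\times p_n$ matrix with $p_n<n$, $E(\boldsymbol\varepsilon)=\mathbf 0$, $\mathrm{Cov}(\boldsymbol\varepsilon)=\boldsymbol\Omega$ positive definite (all may depend on $n$). Fix integers $0=\nu_0<\nu_1<\cdots<\nu_{q_n}=p_n$. For $m=1,\dots,q_n$, $\mathbf X_m$ is the $n\times\nu_m$ matrix of the first $\nu_m$ columns of $\mathbf X$ (full column rank), $\mathbf P_m=\mathbf X_m(\mathbf X_m^\top\mathbf X_m)^{-1}\mathbf X_m^\top$, $\mathbf P_0=\mathbf 0$. Candidate models are $m\in\{1,\dots,M_n\}$, $2\le M_n\le q_n$. $R_n(m)=E\|\mathbf P_m\mathbf y-\boldsymbol\mu\|^2$; for $\mathbf w\in\mathbb R^{M_n}$, $R_n(\mathbf w)=E\|\sum_{m=1}^{M_n}w_m\mathbf P_m\mathbf y-\boldsymbol\mu\|^2$. $\mathcal W_n=\{\mathbf w\in[0,1]^{M_n}:\sum_m w_m=1\}$. $m_n^*$ minimizes $R_n(m)$ over $\{1,\dots,M_n\}$, $m_n^{**}$ over $\{1,\dots,q_n\}$,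 $\mathbf w_n^*$ minimizes $R_n(\mathbf w)$ over $\mathcal W_n$ (all unique); $\Delta_n=R_n(m_n^* )-R_n(\mathbf w_n^* )$. $\theta_{n,m}=\dfrac{n^{-1}\boldsymbol\mu^\top(\mathbf P_m-\mathbf P_{m-1})\boldsymbol\mu}{\mathrm{tr}\{(\mathbf P_m-\mathbf P_{m-1})\boldsymbol\Omega\}}$, $m=1,\dots,q_n$; $d_n=\max\{m:\theta_{n,m}>0\}$. Assumption 1: $\|\boldsymbol\mu\|^2/n=O(1)$. Assumption 2: constants $0<c_1\le c_2<\infty$ with $c_1<\lambda_{\min}(\boldsymbol\Omega)\le\lambda_{\max}(\boldsymbol\Omega)<c_2$. Assumption 3: for each large $n$, $\theta_{n,1}\ge\cdots\ge\theta_{n,q_n}$. Assumption 4: a constant $V\ge1$ with $\max_{1\le m\le d_n}(\nu_m-\nu_{m-1})\le V$ for all large $n$. Assumption 5: for every fixed positive integer $m$ there are $\bar\theta_m>0$, $K_m>0$ such that for all $n\ge K_m$, $m\le d_n$ and $\theta_{n,m}\ge\bar\theta_m$. Assumption 6: for each large $n$ there is $m_n'\in\{1,\dots,d_n-1\}$ with $R_n(m)<R_n(m-1)$ for $2\le m\le m_n'$, $R_n(m)\ge R_n(m-1)$ for $m_n'<m\le d_n$, and $R_n(d_n)>R_n(d_n-1)$. *)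

theory Defs
  imports "Jordan_Normal_Form.Matrix" "Jordan_Normal_Form.Char_Poly"
    "Jordan_Normal_Form.Gauss_Jordan_Elimination" "Jordan_Normal_Form.DL_Rank"
    "HOL-Library.Landau_Symbols"
begin

definition mtrace :: "real mat \<Rightarrow> real" where
  "mtrace A = (\<Sum>i<dim_row A. A $$ (i, i))"

definition sqnorm :: "real vec \<Rightarrow> real" where
  "sqnorm v = v \<bullet> v"

definition first_cols :: "real mat \<Rightarrow> nat \<Rightarrow> real mat" where
  "first_cols X k = mat (dim_row X) k (\<lambda>(i, j). X $$ (i, j))"

definition hat :: "real mat \<Rightarrow> (nat \<Rightarrow> nat) \<Rightarrow> nat \<Rightarrow> real mat" where
  "hat X \<nu> m = (if m = 0 then 0\<^sub>m (dim_row X) (dim_row X) else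
     (let Xm = first_cols X (\<nu> m) in
        Xm * the (mat_inverse (transpose_mat Xm * Xm)) * transpose_mat Xm))"

text \<open>Risk E||A y - mu||^2 for y = mu + eps, E eps = 0, Cov eps = Omega:
  it equals ||A mu - mu||^2 + tr(A Omega A^T).\<close>
definition lin_risk :: "real mat \<Rightarrow> real vec \<Rightarrow> real mat \<Rightarrow> real" where
  "lin_risk A \<mu> \<Omega> = sqnorm (A *\<^sub>v \<mu> - \<mu>) + mtrace (A * \<Omega> * transpose_mat A)"

definition avg_hat :: "real mat \<Rightarrow> (nat \<Rightarrow> nat) \<Rightarrow> nat \<Rightarrow> (nat \<Rightarrow> real) \<Rightarrow> real mat" where
  "avg_hat X \<nu> M w = mat (dim_row X) (dim_row X)
     (\<lambda>(i, j). \<Sum>m\<in>{1..M}. w m * hat X \<nu> m $$ (i, j))"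

definition risk_model :: "real mat \<Rightarrow> (nat \<Rightarrow> nat) \<Rightarrow> real vec \<Rightarrow> real mat \<Rightarrow> nat \<Rightarrow> real" where
  "risk_model X \<nu> \<mu> \<Omega> m = lin_risk (hat X \<nu> m) \<mu> \<Omega>"

definition risk_weight :: "real mat \<Rightarrow> (nat \<Rightarrow> nat) \<Rightarrow> nat \<Rightarrow> real vec \<Rightarrow> real mat \<Rightarrow> (nat \<Rightarrow> real) \<Rightarrow> real" where
  "risk_weight X \<nu> M \<mu> \<Omega> w = lin_risk (avg_hat X \<nu> M w) \<mu> \<Omega>"

definition weight_set :: "nat \<Rightarrow> (nat \<Rightarrow> real) set" where
  "weight_set M = {w. (\<forall>m\<in>{1..M}. 0 \<le> w m \<and> w m \<le> 1) \<and> (\<forall>m. m \<notin> {1..M} \<longrightarrow> w m = 0)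
                     \<and> (\<Sum>m\<in>{1..M}. w m) = 1}"

definition theta :: "real mat \<Rightarrow> (nat \<Rightarrow> nat) \<Rightarrow> real vec \<Rightarrow> real mat \<Rightarrow> nat \<Rightarrow> real" where
  "theta X \<nu> \<mu> \<Omega> m =
     (\<mu> \<bullet> ((hat X \<nu> m - hat X \<nu> (m - 1)) *\<^sub>v \<mu>) / real (dim_row X))
     / mtrace ((hat X \<nu> m - hat X \<nu> (m - 1)) * \<Omega>)"

definition dn :: "real mat \<Rightarrow> (nat \<Rightarrow> nat) \<Rightarrow> nat \<Rightarrow> real vec \<Rightarrow> real mat \<Rightarrow> nat" where
  "dn X \<nu> q \<mu> \<Omega> = (let S = {m\<in>{1..q}. theta X \<nu> \<mu> \<Omega> m > 0} in if S = {} then 0 else Max S)"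

end

theory Submission
  imports Defs "HOL-Analysis.Function_Topology"
begin
lemma exists_min_quad:
  fixes B :: "nat \<Rightarrow> nat \<Rightarrow> real" and n :: nat
  assumes n: "0 < n"
  defines "S \<equiv> {g::nat\<Rightarrow>real. (\<forall>i. n \<le> i \<longrightarrow> g i = 0) \<and> (\<Sum>i<n. (g i)^2) = 1}"
  shows "\<exists>g\<in>S. \<forall>h\<in>S. (\<Sum>i<n. \<Sum>j<n. B i j * g i * g j) \<le> (\<Sum>i<n. \<Sum>j<n. B i j * h i * h j)"
proof -
  let ?K = "Pi\<^sub>E UNIV (\<lambda>i::nat. {-1..1::real})"
  have "compactin (product_topology (\<lambda>i. euclidean) UNIV) ?K"
    by (simp add: compactin_PiE)
  hence cK: "compact ?K" by (simp add: euclidean_product_topology)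
  have c1: "closed {g::nat\<Rightarrow>real. g i = 0}" for i
    using closed_Collect_eq[of "\<lambda>g::nat\<Rightarrow>real. g i" "\<lambda>_. 0"] by simp
  have c2: "closed (\<Inter>i\<in>{n..}. {g::nat\<Rightarrow>real. g i = 0})"
    using c1 by blast
  have cont: "continuous_on UNIV (\<lambda>g::nat\<Rightarrow>real. \<Sum>i<n. (g i)^2)"
    by (intro continuous_intros continuous_on_product_then_coordinatewise continuous_on_id)
  have c3: "closed {g::nat\<Rightarrow>real. (\<Sum>i<n. (g i)^2) = 1}"
    using closed_Collect_eq[OF cont, of "\<lambda>_. 1"] by simp
  have SK: "S \<subseteq> ?K"
  proof
    fix g assume g: "g \<in> S"
    have "\<bar>g i\<bar> \<le> 1" for i
    proof (cases "i < n")
      case True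
      have "(g i)^2 \<le> (\<Sum>i<n. (g i)^2)"
        using True by (intro member_le_sum) auto
      hence "(g i)^2 \<le> 1" using g by (simp add: S_def)
      thus ?thesis by (simp add: abs_square_le_1)
    next
      case False thus ?thesis using g by (simp add: S_def)
    qed
    thus "g \<in> ?K" by (simp add: PiE_UNIV_domain abs_le_iff)
  qed
  have Seq: "S = ?K \<inter> ((\<Inter>i\<in>{n..}. {g::nat\<Rightarrow>real. g i = 0}) \<inter> {g. (\<Sum>i<n. (g i)^2) = 1})"
    using SK unfolding S_def by auto
  have cS: "compact S" unfolding Seq
    by (intro compact_Int_closed cK closed_Int c2 c3)
  have "(\<lambda>i. if i = 0 then 1 else 0::real) \<in> S"
    using n by (simp add: S_def power2_eq_square if_distrib [where f = "\<lambda>x. x * _"] cong: if_cong)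
  hence ne: "S \<noteq> {}" by blast
  have contf: "continuous_on S (\<lambda>g::nat\<Rightarrow>real. \<Sum>i<n. \<Sum>j<n. B i j * g i * g j)"
    by (intro continuous_intros continuous_on_product_then_coordinatewise continuous_on_id)
  show ?thesis using continuous_attains_inf[OF cS ne contf] .
qed

lemma quad_expand:
  fixes B :: "nat \<Rightarrow> nat \<Rightarrow> real"
  assumes sym: "\<And>i j. i < n \<Longrightarrow> j < n \<Longrightarrow> B i j = B j i"
  shows "(\<Sum>i<n. \<Sum>j<n. B i j * (g i + t * r i) * (g j + t * r j))
    = (\<Sum>i<n. \<Sum>j<n. B i j * g i * g j) + 2 * t * (\<Sum>i<n. r i * (\<Sum>j<n. B i j * g j))
      + t^2 * (\<Sum>i<n. \<Sum>j<n. B i j * r i * r j)"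
proof -
  have e: "B i j * (g i + t * r i) * (g j + t * r j) = B i j * g i * g j + t * (B i j * r i * g j)
     + t * (B i j * g i * r j) + t^2 * (B i j * r i * r j)" for i j
    by (simp add: algebra_simps power2_eq_square)
  have sw: "(\<Sum>i<n. \<Sum>j<n. B i j * g i * r j) = (\<Sum>i<n. \<Sum>j<n. B i j * r i * g j)"
  proof -
    have "(\<Sum>i<n. \<Sum>j<n. B i j * g i * r j) = (\<Sum>j<n. \<Sum>i<n. B i j * g i * r j)"
      by (rule sum.swap)
    also have "\<dots> = (\<Sum>j<n. \<Sum>i<n. B j i * r j * g i)"
      by (intro sum.cong refl) (simp add: sym mult.commute mult.left_commute)
    finally show ?thesis .
  qed
  have XY: "(\<Sum>i<n. \<Sum>j<n. B i j * r i * g j) = (\<Sum>i<n. r i * (\<Sum>j<n. B i j * g j))"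
    by (simp add: sum_distrib_left mult.commute mult.left_commute)
  have "(\<Sum>i<n. \<Sum>j<n. B i j * (g i + t * r i) * (g j + t * r j))
     = (\<Sum>i<n. \<Sum>j<n. B i j * g i * g j) + t * (\<Sum>i<n. \<Sum>j<n. B i j * r i * g j)
       + t * (\<Sum>i<n. \<Sum>j<n. B i j * g i * r j) + t^2 * (\<Sum>i<n. \<Sum>j<n. B i j * r i * r j)"
    by (simp add: e sum.distrib sum_distrib_left)
  then show ?thesis unfolding sw XY by simp
qed

lemma quad_nonneg_lin:
  fixes a K :: real
  assumes "a \<ge> 0" "\<And>t. 0 \<le> 2 * t * a + t^2 * K"
  shows "a = 0"
proof (rule ccontr)
  assume "a \<noteq> 0" hence a: "a > 0" using assms(1) by simp
  define t where "t = - a / (\<bar>K\<bar> + 1)"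
  have tn: "t < 0" using a by (simp add: t_def)
  have "0 \<le> 2 * t * a + t^2 * K" by (rule assms(2))
  also have "\<dots> \<le> 2 * t * a + t^2 * \<bar>K\<bar>"
    by (intro add_left_mono mult_left_mono) auto
  also have "\<dots> = t * (2 * a + t * \<bar>K\<bar>)" by (simp add: power2_eq_square algebra_simps)
  also have "2 * a + t * \<bar>K\<bar> > 0"
  proof -
    have "t * \<bar>K\<bar> = - a * (\<bar>K\<bar> / (\<bar>K\<bar> + 1))" by (simp add: t_def)
    moreover have "\<bar>K\<bar> / (\<bar>K\<bar> + 1) \<le> 1" by simp
    moreover have "a * (\<bar>K\<bar> / (\<bar>K\<bar> + 1)) \<le> a * 1"
      using a \<open>\<bar>K\<bar> / (\<bar>K\<bar> + 1) \<le> 1\<close> by (intro mult_left_mono) auto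
    ultimately have "t * \<bar>K\<bar> \<ge> - a" by simp
    thus ?thesis using a by linarith
  qed
  hence "t * (2 * a + t * \<bar>K\<bar>) < 0" using tn by (simp add: mult_neg_pos)
  finally show False by simp
qed

lemma min_eig_sum:
  fixes B :: "nat \<Rightarrow> nat \<Rightarrow> real"
  assumes n: "0 < n" and sym: "\<And>i j. i < n \<Longrightarrow> j < n \<Longrightarrow> B i j = B j i"
  shows "\<exists>lam g. (\<forall>i. n \<le> i \<longrightarrow> g i = 0) \<and> (\<Sum>i<n. (g i)^2) = 1
     \<and> (\<forall>i<n. (\<Sum>j<n. B i j * g j) = lam * g i)
     \<and> (\<forall>x. lam * (\<Sum>i<n. (x i)^2) \<le> (\<Sum>i<n. \<Sum>j<n. B i j * x i * x j))"
proof -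
  define S where "S = {g::nat\<Rightarrow>real. (\<forall>i. n \<le> i \<longrightarrow> g i = 0) \<and> (\<Sum>i<n. (g i)^2) = 1}"
  let ?Q = "\<lambda>x. (\<Sum>i<n. \<Sum>j<n. B i j * x i * x j)"
  let ?N = "\<lambda>x. (\<Sum>i<n. (x i)^2)"
  obtain g where gS: "g \<in> S" and gmin: "\<And>h. h \<in> S \<Longrightarrow> ?Q g \<le> ?Q h"
    using exists_min_quad[OF n, of B] unfolding S_def by blast
  define lam where "lam = ?Q g"
  have Ng: "?N g = 1" using gS by (simp add: S_def)
  have bound: "lam * ?N x \<le> ?Q x" for x
  proof (cases "?N x = 0")
    case True
    hence "\<forall>i\<in>{..<n}. (x i)^2 = 0"
      by (subst sum_nonneg_eq_0_iff[symmetric]) auto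
    hence "\<And>i. i < n \<Longrightarrow> x i = 0" by simp
    hence "?Q x = 0" by simp
    thus ?thesis using True by simp
  next
    case False
    hence Np: "?N x > 0" using sum_nonneg[of "{..<n}" "\<lambda>i. (x i)^2"] by fastforce
    define s where "s = sqrt (?N x)"
    have sp: "s > 0" using Np by (simp add: s_def)
    have s2: "s^2 = ?N x" using Np by (simp add: s_def)
    define h where "h = (\<lambda>i. if i < n then x i / s else 0)"
    have "?N h = (\<Sum>i<n. (x i)^2 / s^2)" by (intro sum.cong) (auto simp: h_def power_divide)
    also have "\<dots> = 1" using s2 Np by (simp add: sum_divide_distrib[symmetric])
    finally have "h \<in> S" by (simp add: S_def h_def)
    hence "lam \<le> ?Q h" using gmin by (simp add: lam_def)
    also have "?Q h = (\<Sum>i<n. \<Sum>j<n. B i j * x i * x j / s^2)"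
      by (intro sum.cong) (auto simp: h_def power2_eq_square)
    also have "\<dots> = ?Q x / s^2" by (simp add: sum_divide_distrib)
    finally have "lam \<le> ?Q x / ?N x" using s2 by simp
    thus ?thesis using Np by (simp add: pos_le_divide_eq mult.commute)
  qed
  define r where "r = (\<lambda>i. (\<Sum>j<n. B i j * g j) - lam * g i)"
  have key: "0 \<le> 2 * t * ?N r + t^2 * (?Q r - lam * ?N r)" for t
  proof -
    have "lam * ?N (\<lambda>i. g i + t * r i) \<le> ?Q (\<lambda>i. g i + t * r i)" by (rule bound)
    also have "?Q (\<lambda>i. g i + t * r i) = ?Q g + 2 * t * (\<Sum>i<n. r i * (\<Sum>j<n. B i j * g j))
      + t^2 * ?Q r" by (rule quad_expand[OF sym])
    also have "?N (\<lambda>i. g i + t * r i) = ?N g + 2 * t * (\<Sum>i<n. r i * g i) + t^2 * ?N r"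
    proof -
      have "(g i + t * r i)^2 = (g i)^2 + 2 * t * (r i * g i) + t^2 * (r i)^2" for i
        by (simp add: power2_eq_square algebra_simps)
      thus ?thesis by (simp add: sum.distrib sum_distrib_left)
    qed
    finally have "lam * (?N g + 2 * t * (\<Sum>i<n. r i * g i) + t^2 * ?N r)
       \<le> ?Q g + 2 * t * (\<Sum>i<n. r i * (\<Sum>j<n. B i j * g j)) + t^2 * ?Q r" .
    moreover have "(\<Sum>i<n. r i * (\<Sum>j<n. B i j * g j)) - lam * (\<Sum>i<n. r i * g i) = ?N r"
    proof -
      have "(\<Sum>i<n. r i * (\<Sum>j<n. B i j * g j)) - lam * (\<Sum>i<n. r i * g i)
          = (\<Sum>i<n. r i * (\<Sum>j<n. B i j * g j) - lam * (r i * g i))"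
        by (simp add: sum_subtractf sum_distrib_left)
      also have "\<dots> = (\<Sum>i<n. r i * r i)"
        by (intro sum.cong refl) (simp add: r_def algebra_simps)
      finally show ?thesis by (simp add: power2_eq_square)
    qed
    ultimately show ?thesis using Ng unfolding lam_def[symmetric]
      by (simp add: algebra_simps)
  qed
  have "?N r = 0" by (rule quad_nonneg_lin[OF _ key]) (simp add: sum_nonneg)
  hence "\<forall>i\<in>{..<n}. (r i)^2 = 0"
    by (subst sum_nonneg_eq_0_iff[symmetric]) auto
  hence ev: "\<forall>i<n. (\<Sum>j<n. B i j * g j) = lam * g i" by (simp add: r_def)
  show ?thesis
    by (rule exI[of _ lam], rule exI[of _ g]) (use gS ev bound in \<open>auto simp: S_def\<close>)
qed

lemma quad_vec:
  fixes A :: "real mat"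
  assumes A: "A \<in> carrier_mat n n" and x: "x \<in> carrier_vec n"
  shows "x \<bullet> (A *\<^sub>v x) = (\<Sum>i<n. \<Sum>j<n. A $$ (i, j) * x $ i * x $ j)"
proof -
  have "x \<bullet> (A *\<^sub>v x) = (\<Sum>i<n. x $ i * (row A i \<bullet> x))"
    using A x by (simp add: scalar_prod_def atLeast0LessThan)
  also have "\<dots> = (\<Sum>i<n. \<Sum>j<n. A $$ (i, j) * x $ i * x $ j)"
  proof (intro sum.cong refl)
    fix i assume "i \<in> {..<n}"
    hence i: "i < n" by simp
    have "row A i \<bullet> x = (\<Sum>j<n. A $$ (i, j) * x $ j)"
      using A x i by (simp add: scalar_prod_def atLeast0LessThan)
    thus "x $ i * (row A i \<bullet> x) = (\<Sum>j<n. A $$ (i, j) * x $ i * x $ j)"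
      by (simp add: sum_distrib_left ac_simps)
  qed
  finally show ?thesis .
qed

lemma sqn_vec:
  fixes x :: "real vec"
  assumes x: "x \<in> carrier_vec n"
  shows "x \<bullet> x = (\<Sum>i<n. (x $ i)^2)"
  unfolding power2_eq_square using x by (simp add: scalar_prod_def atLeast0LessThan)

lemma Omega_bounds:
  fixes \<Omega> :: "real mat"
  assumes O: "\<Omega> \<in> carrier_mat n n" and sym: "transpose_mat \<Omega> = \<Omega>" and n: "0 < n"
    and ev: "\<forall>k. eigenvalue \<Omega> k \<longrightarrow> c1 < k \<and> k < c2"
    and x: "x \<in> carrier_vec n"
  shows "c1 * (x \<bullet> x) \<le> x \<bullet> (\<Omega> *\<^sub>v x) \<and> x \<bullet> (\<Omega> *\<^sub>v x) \<le> c2 * (x \<bullet> x)"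
proof -
  have symB: "\<Omega> $$ (i, j) = \<Omega> $$ (j, i)" if "i < n" "j < n" for i j
  proof -
    have "\<Omega> $$ (i, j) = transpose_mat \<Omega> $$ (i, j)" using sym by simp
    also have "\<dots> = \<Omega> $$ (j, i)" using O that by simp
    finally show ?thesis .
  qed
  have evI: "eigenvalue \<Omega> lam" if g0: "(\<Sum>i<n. (g i)^2) = 1"
      and gev: "\<forall>i<n. (\<Sum>j<n. \<Omega> $$ (i, j) * g j) = lam * g i" for g lam
  proof -
    let ?u = "vec n g"
    have "?u \<noteq> 0\<^sub>v n"
    proof
      assume "?u = 0\<^sub>v n"
      hence "\<And>i. i < n \<Longrightarrow> g i = 0" by (metis index_vec index_zero_vec(1))
      hence "(\<Sum>i<n. (g i)^2) = 0" by simp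
      thus False using g0 by simp
    qed
    moreover have "\<Omega> *\<^sub>v ?u = lam \<cdot>\<^sub>v ?u"
    proof (rule eq_vecI)
      fix i assume "i < dim_vec (lam \<cdot>\<^sub>v ?u)"
      hence i: "i < n" by simp
      have "(\<Omega> *\<^sub>v ?u) $ i = (\<Sum>j<n. \<Omega> $$ (i, j) * g j)"
        using O i by (simp add: scalar_prod_def atLeast0LessThan mult.commute)
      also have "\<dots> = lam * g i" using gev i by simp
      finally show "(\<Omega> *\<^sub>v ?u) $ i = (lam \<cdot>\<^sub>v ?u) $ i" using i by simp
    qed (use O in simp)
    ultimately show ?thesis using O unfolding eigenvalue_def eigenvector_def
      by (intro exI[of _ ?u]) auto
  qed
  have Q: "x \<bullet> (\<Omega> *\<^sub>v x) = (\<Sum>i<n. \<Sum>j<n. \<Omega> $$ (i, j) * x $ i * x $ j)"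
    by (rule quad_vec[OF O x])
  have N: "x \<bullet> x = (\<Sum>i<n. (x $ i)^2)" by (rule sqn_vec[OF x])
  obtain lam g where g0: "(\<Sum>i<n. (g i)^2) = 1"
     and gev: "\<forall>i<n. (\<Sum>j<n. \<Omega> $$ (i, j) * g j) = lam * g i"
     and gb: "\<forall>y. lam * (\<Sum>i<n. (y i)^2) \<le> (\<Sum>i<n. \<Sum>j<n. \<Omega> $$ (i, j) * y i * y j)"
    using min_eig_sum[OF n, of "\<lambda>i j. \<Omega> $$ (i, j)"] symB by blast
  have "c1 < lam" using ev evI[OF g0 gev] by blast
  moreover have "lam * (x \<bullet> x) \<le> x \<bullet> (\<Omega> *\<^sub>v x)" using gb unfolding Q N by blast
  moreover have "0 \<le> x \<bullet> x" unfolding N by (simp add: sum_nonneg)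
  ultimately have lower: "c1 * (x \<bullet> x) \<le> x \<bullet> (\<Omega> *\<^sub>v x)"
  proof -
    assume a: "c1 < lam" "lam * (x \<bullet> x) \<le> x \<bullet> (\<Omega> *\<^sub>v x)" "0 \<le> x \<bullet> x"
    have "c1 * (x \<bullet> x) \<le> lam * (x \<bullet> x)" using a by (intro mult_right_mono) auto
    thus ?thesis using a by linarith
  qed
  obtain lam' h where h0: "(\<Sum>i<n. (h i)^2) = 1"
     and hev: "\<forall>i<n. (\<Sum>j<n. - \<Omega> $$ (i, j) * h j) = lam' * h i"
     and hb: "\<forall>y. lam' * (\<Sum>i<n. (y i)^2) \<le> (\<Sum>i<n. \<Sum>j<n. - \<Omega> $$ (i, j) * y i * y j)"
    using min_eig_sum[OF n, of "\<lambda>i j. - \<Omega> $$ (i, j)"] symB by force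
  have hev': "\<forall>i<n. (\<Sum>j<n. \<Omega> $$ (i, j) * h j) = (- lam') * h i"
  proof (intro allI impI)
    fix i assume "i < n"
    hence "(\<Sum>j<n. - \<Omega> $$ (i, j) * h j) = lam' * h i" using hev by blast
    hence "- (\<Sum>j<n. \<Omega> $$ (i, j) * h j) = lam' * h i" by (simp add: sum_negf[symmetric])
    thus "(\<Sum>j<n. \<Omega> $$ (i, j) * h j) = (- lam') * h i" by simp
  qed
  have "- lam' < c2" using ev evI[OF h0 hev'] by blast
  moreover have "lam' * (x \<bullet> x) \<le> - (x \<bullet> (\<Omega> *\<^sub>v x))"
  proof -
    have "lam' * (x \<bullet> x) \<le> (\<Sum>i<n. \<Sum>j<n. - \<Omega> $$ (i, j) * x $ i * x $ j)"
      using hb unfolding N by blast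
    also have "\<dots> = - (x \<bullet> (\<Omega> *\<^sub>v x))" unfolding Q by (simp add: sum_negf[symmetric])
    finally show ?thesis .
  qed
  ultimately have upper: "x \<bullet> (\<Omega> *\<^sub>v x) \<le> c2 * (x \<bullet> x)"
  proof -
    assume a: "- lam' < c2" "lam' * (x \<bullet> x) \<le> - (x \<bullet> (\<Omega> *\<^sub>v x))"
    have "(- lam') * (x \<bullet> x) \<le> c2 * (x \<bullet> x)" using a \<open>0 \<le> x \<bullet> x\<close>
      by (intro mult_right_mono) auto
    moreover have "(- lam') * (x \<bullet> x) = - (lam' * (x \<bullet> x))" by simp
    ultimately show ?thesis using a by linarith
  qed
  show ?thesis using lower upper by blast
qed

lemma (in vec_space) non_distinct_low_rank':
assumes "A \<in> carrier_mat n nc"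
and "\<not> distinct (cols A)"
shows "rank A < nc"
proof -
  obtain S where "maximal S (\<lambda>T. T \<subseteq> set (cols A) \<and> lin_indpt T)"
    using maximal_exists[of "(\<lambda>T. T \<subseteq> set (cols A) \<and> lin_indpt T)" "card (set (cols A))" "{}"]
    by (meson List.finite_set card_mono empty_iff empty_subsetI finite_lin_indpt2 rev_finite_subset)
  then have "card S \<le> card (set (cols A))" by (simp add: card_mono maximal_def)
  then have "card S < nc"
    using assms(1) cols_length card_length \<open>\<not> distinct (cols A)\<close> card_distinct carrier_matD(2) nat_less_le
    by (metis dual_order.antisym dual_order.trans)
  then show ?thesis
    using rank_card_indpt[OF \<open>A \<in> carrier_mat n nc\<close> \<open>maximal S (\<lambda>T. T \<subseteq> set (cols A) \<and> lin_indpt T)\<close>]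
    by simp
qed

lemma (in vec_space) full_rank_ker:
  assumes A: "A \<in> carrier_mat n nc" and r: "rank A = nc"
    and v: "v \<in> carrier_vec nc" and Av: "A *\<^sub>v v = 0\<^sub>v n"
  shows "v = 0\<^sub>v nc"
proof (rule ccontr)
  assume v0: "v \<noteq> 0\<^sub>v nc"
  have d: "distinct (cols A)" using non_distinct_low_rank'[OF A] r by fastforce
  have "lin_indpt (set (cols A))" by (rule full_rank_lin_indpt[OF A r d])
  moreover have "lin_dep (set (cols A))" by (rule lin_depI[OF A v v0 Av d])
  ultimately show False by simp
qed

lemma mtrace_comm:
  assumes A: "A \<in> carrier_mat n k" and B: "B \<in> carrier_mat k n"
  shows "mtrace (A * B) = mtrace (B * A)"
proof -
  have "mtrace (A * B) = (\<Sum>i<n. \<Sum>j<k. A $$ (i, j) * B $$ (j, i))"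
    using A B by (simp add: mtrace_def scalar_prod_def atLeast0LessThan)
  also have "\<dots> = (\<Sum>j<k. \<Sum>i<n. A $$ (i, j) * B $$ (j, i))" by (rule sum.swap)
  also have "\<dots> = mtrace (B * A)"
    using A B by (simp add: mtrace_def scalar_prod_def atLeast0LessThan mult.commute)
  finally show ?thesis .
qed

lemma mtrace_one: "mtrace (1\<^sub>m k) = real k"
  by (simp add: mtrace_def)

lemma vec_self_zero:
  fixes w :: "real vec"
  assumes w: "w \<in> carrier_vec n" and z: "w \<bullet> w = 0"
  shows "w = 0\<^sub>v n"
proof -
  have "(\<Sum>i<n. (w $ i)^2) = 0" using z w by (simp add: scalar_prod_def atLeast0LessThan power2_eq_square)
  hence "\<forall>i\<in>{..<n}. (w $ i)^2 = 0" by (subst sum_nonneg_eq_0_iff[symmetric]) auto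
  thus ?thesis using w by (intro eq_vecI) auto
qed

lemma gram_inverse:
  fixes Xm :: "real mat"
  assumes X: "Xm \<in> carrier_mat n k"
    and inj: "\<And>v. v \<in> carrier_vec k \<Longrightarrow> Xm *\<^sub>v v = 0\<^sub>v n \<Longrightarrow> v = 0\<^sub>v k"
  shows "\<exists>Gi. mat_inverse (transpose_mat Xm * Xm) = Some Gi \<and> Gi \<in> carrier_mat k k
     \<and> transpose_mat Xm * Xm * Gi = 1\<^sub>m k \<and> Gi * (transpose_mat Xm * Xm) = 1\<^sub>m k
     \<and> transpose_mat Gi = Gi"
proof -
  define G where "G = transpose_mat Xm * Xm"
  have G: "G \<in> carrier_mat k k" using X by (simp add: G_def)
  have "det G \<noteq> 0"
  proof
    assume "det G = 0"
    then obtain v where v: "v \<in> carrier_vec k" "v \<noteq> 0\<^sub>v k" "G *\<^sub>v v = 0\<^sub>v k"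
      using det_0_iff_vec_prod_zero[OF G] by blast
    have Xv: "Xm *\<^sub>v v \<in> carrier_vec n" using X v by simp
    have "(Xm *\<^sub>v v) \<bullet> (Xm *\<^sub>v v) = (transpose_mat Xm *\<^sub>v (Xm *\<^sub>v v)) \<bullet> v"
      using transpose_vec_mult_scalar[OF X v(1) Xv] by simp
    also have "transpose_mat Xm *\<^sub>v (Xm *\<^sub>v v) = G *\<^sub>v v"
      unfolding G_def using X v by (simp add: assoc_mult_mat_vec)
    also have "\<dots> \<bullet> v = 0" using v by simp
    finally have "Xm *\<^sub>v v = 0\<^sub>v n" using vec_self_zero[OF Xv] by simp
    hence "v = 0\<^sub>v k" using inj v by blast
    thus False using v by simp
  qed
  hence U: "G \<in> Units (ring_mat TYPE(real) k ())" by (rule det_non_zero_imp_unit[OF G])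
  have "mat_inverse G \<noteq> None"
  proof
    assume N: "mat_inverse G = None"
    show False using mat_inverse(1)[OF G N, where b="()"] U by blast
  qed
  then obtain Gi where Gi: "mat_inverse G = Some Gi" by blast
  from mat_inverse(2)[OF G Gi] have inv: "G * Gi = 1\<^sub>m k" "Gi * G = 1\<^sub>m k" "Gi \<in> carrier_mat k k" by auto
  have GT: "transpose_mat G = G" unfolding G_def using X by (simp add: transpose_mult)
  have "transpose_mat Gi * G = 1\<^sub>m k"
  proof -
    have "transpose_mat Gi * G = transpose_mat Gi * transpose_mat G" using GT by simp
    also have "\<dots> = transpose_mat (G * Gi)" by (rule transpose_mult[OF G inv(3), symmetric])
    finally show ?thesis using inv by simp
  qed
  hence "transpose_mat Gi = Gi"
  proof -
    assume l: "transpose_mat Gi * G = 1\<^sub>m k"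
    have "transpose_mat Gi = transpose_mat Gi * (G * Gi)" using inv by simp
    also have "\<dots> = (transpose_mat Gi * G) * Gi" using inv G by (simp add: assoc_mult_mat)
    finally show ?thesis using l inv by simp
  qed
  thus ?thesis using Gi inv unfolding G_def by blast
qed

lemma proj_basic:
  fixes Xm :: "real mat"
  assumes X: "Xm \<in> carrier_mat n k"
    and inj: "\<And>v. v \<in> carrier_vec k \<Longrightarrow> Xm *\<^sub>v v = 0\<^sub>v n \<Longrightarrow> v = 0\<^sub>v k"
  defines "P \<equiv> Xm * the (mat_inverse (transpose_mat Xm * Xm)) * transpose_mat Xm"
  shows "P \<in> carrier_mat n n" "transpose_mat P = P" "P * Xm = Xm" "mtrace P = real k"
proof -
  obtain Gi where Gi: "mat_inverse (transpose_mat Xm * Xm) = Some Gi" "Gi \<in> carrier_mat k k"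
     "transpose_mat Xm * Xm * Gi = 1\<^sub>m k" "Gi * (transpose_mat Xm * Xm) = 1\<^sub>m k"
     "transpose_mat Gi = Gi"
    using gram_inverse[OF X inj] by blast
  have P: "P = Xm * Gi * transpose_mat Xm" unfolding P_def Gi(1) by simp
  have XT: "transpose_mat Xm \<in> carrier_mat k n" using X by simp
  show Pc: "P \<in> carrier_mat n n" unfolding P using X Gi(2) by simp
  show "transpose_mat P = P"
  proof -
    have "transpose_mat P = transpose_mat (transpose_mat Xm) * transpose_mat (Xm * Gi)"
      unfolding P by (rule transpose_mult[OF mult_carrier_mat[OF X Gi(2)] XT])
    also have "transpose_mat (Xm * Gi) = transpose_mat Gi * transpose_mat Xm"
      by (rule transpose_mult[OF X Gi(2)])
    finally have "transpose_mat P = Xm * (Gi * transpose_mat Xm)" using Gi(5) by simp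
    also have "\<dots> = P" unfolding P using X Gi(2) XT by (simp add: assoc_mult_mat)
    finally show ?thesis .
  qed
  show "P * Xm = Xm"
  proof -
    have G: "transpose_mat Xm * Xm \<in> carrier_mat k k" using X by simp
    have "P * Xm = Xm * Gi * (transpose_mat Xm * Xm)"
      unfolding P by (rule assoc_mult_mat[OF mult_carrier_mat[OF X Gi(2)] XT X])
    also have "\<dots> = Xm * (Gi * (transpose_mat Xm * Xm))"
      by (rule assoc_mult_mat[OF X Gi(2) G])
    also have "\<dots> = Xm" using Gi(4) X by simp
    finally show ?thesis .
  qed
  show "mtrace P = real k"
  proof -
    have "P = Xm * (Gi * transpose_mat Xm)" unfolding P using X Gi(2) XT by (simp add: assoc_mult_mat)
    hence "mtrace P = mtrace ((Gi * transpose_mat Xm) * Xm)"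
      using mtrace_comm[OF X mult_carrier_mat[OF Gi(2) XT]] by simp
    also have "(Gi * transpose_mat Xm) * Xm = Gi * (transpose_mat Xm * Xm)"
      using X Gi(2) XT by (simp add: assoc_mult_mat)
    finally show ?thesis using Gi(4) by (simp add: mtrace_one)
  qed
qed

lemma first_cols_carrier: "dim_row X = n \<Longrightarrow> first_cols X k \<in> carrier_mat n k"
  by (simp add: first_cols_def)

lemma first_cols_sel:
  assumes X: "dim_row X = n" and ab: "a \<le> b"
  shows "first_cols X a = first_cols X b * mat b a (\<lambda>(i, j). if i = j then 1 else 0)"
proof (rule eq_matI)
  fix i j assume "i < dim_row (first_cols X b * mat b a (\<lambda>(i, j). if i = j then 1 else 0))"
    "j < dim_col (first_cols X b * mat b a (\<lambda>(i, j). if i = j then 1 else 0))"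
  hence ij: "i < n" "j < a" using X by (auto simp: first_cols_def)
  have "(first_cols X b * mat b a (\<lambda>(i, j). if i = j then 1 else 0)) $$ (i, j)
      = (\<Sum>l<b. X $$ (i, l) * (if l = j then 1 else 0))"
    using ij X ab by (simp add: first_cols_def scalar_prod_def atLeast0LessThan)
  also have "\<dots> = X $$ (i, j)" using ij ab by (simp add: if_distrib cong: if_cong)
  finally show "first_cols X a $$ (i, j) = (first_cols X b * mat b a (\<lambda>(i, j). if i = j then 1 else 0)) $$ (i, j)"
    using ij X by (simp add: first_cols_def)
qed (use X in \<open>auto simp: first_cols_def\<close>)

lemma nu_mono:
  assumes mono: "\<forall>m<q. \<nu> m < (\<nu> (Suc m) :: nat)"
  shows "k \<le> m \<Longrightarrow> m \<le> q \<Longrightarrow> \<nu> k + (m - k) \<le> \<nu> m"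
proof (induction m)
  case 0 thus ?case by simp
next
  case (Suc m)
  show ?case
  proof (cases "k = Suc m")
    case True thus ?thesis by simp
  next
    case False
    hence "k \<le> m" using Suc by simp
    hence "\<nu> k + (m - k) \<le> \<nu> m" using Suc by simp
    moreover have "\<nu> m < \<nu> (Suc m)" using mono Suc by simp
    ultimately show ?thesis using \<open>k \<le> m\<close> by simp
  qed
qed

lemma hat_pos:
  fixes X :: "real mat"
  assumes X: "X \<in> carrier_mat n p" and m: "1 \<le> m" "\<nu> m \<le> p"
    and rk: "vec_space.rank n (first_cols X (\<nu> m)) = \<nu> m"
  shows "hat X \<nu> m \<in> carrier_mat n n" "transpose_mat (hat X \<nu> m) = hat X \<nu> m"
    "hat X \<nu> m * first_cols X (\<nu> m) = first_cols X (\<nu> m)" "mtrace (hat X \<nu> m) = real (\<nu> m)"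
proof -
  let ?Xm = "first_cols X (\<nu> m)"
  have Xm: "?Xm \<in> carrier_mat n (\<nu> m)" using X by (simp add: first_cols_carrier)
  have inj: "v = 0\<^sub>v (\<nu> m)" if "v \<in> carrier_vec (\<nu> m)" "?Xm *\<^sub>v v = 0\<^sub>v n" for v
    using vec_space.full_rank_ker[OF Xm rk that] .
  have h: "hat X \<nu> m = ?Xm * the (mat_inverse (transpose_mat ?Xm * ?Xm)) * transpose_mat ?Xm"
    using m by (simp add: hat_def Let_def)
  note pb = proj_basic[OF Xm inj, folded h]
  show "hat X \<nu> m \<in> carrier_mat n n" "transpose_mat (hat X \<nu> m) = hat X \<nu> m"
    "hat X \<nu> m * first_cols X (\<nu> m) = first_cols X (\<nu> m)" "mtrace (hat X \<nu> m) = real (\<nu> m)"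
    using pb by auto
qed

lemma hat_system:
  fixes X :: "real mat"
  assumes X: "X \<in> carrier_mat n p" and nu0: "\<nu> 0 = 0" and mono: "\<forall>m<q. \<nu> m < \<nu> (Suc m)"
    and nuq: "\<nu> q = p"
    and rk: "\<forall>m\<in>{1..q}. vec_space.rank n (first_cols X (\<nu> m)) = \<nu> m"
  shows "\<forall>m\<le>q. hat X \<nu> m \<in> carrier_mat n n \<and> transpose_mat (hat X \<nu> m) = hat X \<nu> m
            \<and> mtrace (hat X \<nu> m) = real (\<nu> m)"
    and "\<forall>k m. k \<le> m \<longrightarrow> m \<le> q \<longrightarrow> hat X \<nu> m * hat X \<nu> k = hat X \<nu> k
            \<and> hat X \<nu> k * hat X \<nu> m = hat X \<nu> k"
proof -
  have nup: "\<nu> m \<le> p" if "m \<le> q" for m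
    using nu_mono[OF mono, of m q] that nuq by simp
  have h0: "hat X \<nu> 0 = 0\<^sub>m n n" using X by (simp add: hat_def)
  have basic: "hat X \<nu> m \<in> carrier_mat n n \<and> transpose_mat (hat X \<nu> m) = hat X \<nu> m
            \<and> mtrace (hat X \<nu> m) = real (\<nu> m)" if "m \<le> q" for m
  proof (cases "m = 0")
    case True thus ?thesis using h0 nu0 by (simp add: mtrace_def)
  next
    case False
    hence m1: "1 \<le> m" by simp
    have "vec_space.rank n (first_cols X (\<nu> m)) = \<nu> m" using rk m1 that by simp
    thus ?thesis using hat_pos[where \<nu>=\<nu> and m=m, OF X m1 nup[OF that]] by simp
  qed
  show "\<forall>m\<le>q. hat X \<nu> m \<in> carrier_mat n n \<and> transpose_mat (hat X \<nu> m) = hat X \<nu> m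
            \<and> mtrace (hat X \<nu> m) = real (\<nu> m)" using basic by blast
  show "\<forall>k m. k \<le> m \<longrightarrow> m \<le> q \<longrightarrow> hat X \<nu> m * hat X \<nu> k = hat X \<nu> k
            \<and> hat X \<nu> k * hat X \<nu> m = hat X \<nu> k"
  proof (intro allI impI)
    fix k m assume km: "k \<le> m" and mq: "m \<le> q"
    have Pm: "hat X \<nu> m \<in> carrier_mat n n" "transpose_mat (hat X \<nu> m) = hat X \<nu> m"
      using basic mq by auto
    have Pk: "hat X \<nu> k \<in> carrier_mat n n" "transpose_mat (hat X \<nu> k) = hat X \<nu> k"
      using basic km mq by auto
    have mk: "hat X \<nu> m * hat X \<nu> k = hat X \<nu> k"
    proof (cases "k = 0")
      case True thus ?thesis using h0 Pm by simp
    next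
      case False
      hence k1: "1 \<le> k" and m1: "1 \<le> m" using km by auto
      let ?Xk = "first_cols X (\<nu> k)" and ?Xm = "first_cols X (\<nu> m)"
      let ?E = "mat (\<nu> m) (\<nu> k) (\<lambda>(i, j). if i = j then 1 else (0::real))"
      have nkm: "\<nu> k \<le> \<nu> m" using nu_mono[OF mono km mq] by simp
      have Xk: "?Xk = ?Xm * ?E" using first_cols_sel[of X n "\<nu> k" "\<nu> m"] X nkm by simp
      have Xmc: "?Xm \<in> carrier_mat n (\<nu> m)" using X by (simp add: first_cols_carrier)
      have Xkc: "?Xk \<in> carrier_mat n (\<nu> k)" using X by (simp add: first_cols_carrier)
      have Ec: "?E \<in> carrier_mat (\<nu> m) (\<nu> k)" by simp
      have PmXm: "hat X \<nu> m * ?Xm = ?Xm"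
        using hat_pos(3)[where \<nu>=\<nu> and m=m, OF X m1 nup[OF mq]] rk m1 mq by simp
      have PmXk: "hat X \<nu> m * ?Xk = ?Xk"
      proof -
        have "hat X \<nu> m * ?Xk = hat X \<nu> m * ?Xm * ?E"
          unfolding Xk by (rule assoc_mult_mat[OF Pm(1) Xmc Ec, symmetric])
        thus ?thesis unfolding PmXm Xk[symmetric] .
      qed
      define Gk where "Gk = the (mat_inverse (transpose_mat ?Xk * ?Xk))"
      have hk: "hat X \<nu> k = ?Xk * Gk * transpose_mat ?Xk"
        using k1 by (simp add: hat_def Let_def Gk_def)
      have Gkc: "Gk \<in> carrier_mat (\<nu> k) (\<nu> k)"
      proof -
        have inj: "v = 0\<^sub>v (\<nu> k)" if "v \<in> carrier_vec (\<nu> k)" "?Xk *\<^sub>v v = 0\<^sub>v n" for v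
          using vec_space.full_rank_ker[OF Xkc _ that] rk k1 km mq by simp
        from gram_inverse[OF Xkc inj] show ?thesis unfolding Gk_def by auto
      qed
      have XkT: "transpose_mat ?Xk \<in> carrier_mat (\<nu> k) n" using Xkc by simp
      have "hat X \<nu> m * hat X \<nu> k = hat X \<nu> m * (?Xk * (Gk * transpose_mat ?Xk))"
        unfolding hk using assoc_mult_mat[OF Xkc Gkc XkT] by simp
      also have "\<dots> = (hat X \<nu> m * ?Xk) * (Gk * transpose_mat ?Xk)"
        by (rule assoc_mult_mat[OF Pm(1) Xkc mult_carrier_mat[OF Gkc XkT], symmetric])
      also have "\<dots> = hat X \<nu> k" unfolding PmXk hk using assoc_mult_mat[OF Xkc Gkc XkT] by simp
      finally show ?thesis .
    qed
    have "hat X \<nu> k * hat X \<nu> m = transpose_mat (hat X \<nu> m * hat X \<nu> k)"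
      using transpose_mult[OF Pm(1) Pk(1)] Pm Pk by simp
    also have "\<dots> = hat X \<nu> k" using mk Pk by simp
    finally show "hat X \<nu> m * hat X \<nu> k = hat X \<nu> k \<and> hat X \<nu> k * hat X \<nu> m = hat X \<nu> k"
      using mk by simp
  qed
qed

lemma mtrace_minus: "A \<in> carrier_mat n n \<Longrightarrow> B \<in> carrier_mat n n \<Longrightarrow> mtrace (A - B) = mtrace A - mtrace B"
  by (simp add: mtrace_def sum_subtractf)

lemma V_rows:
  fixes A \<Omega> :: "real mat"
  assumes A: "A \<in> carrier_mat n n" and O: "\<Omega> \<in> carrier_mat n n"
  shows "mtrace (A * \<Omega> * transpose_mat A) = (\<Sum>i<n. row A i \<bullet> (\<Omega> *\<^sub>v row A i))"
proof -
  have L: "(A * \<Omega> * transpose_mat A) $$ (i, i) = (\<Sum>l<n. A $$ (i, l) * (\<Sum>j<n. \<Omega> $$ (l, j) * A $$ (i, j)))"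
    if i: "i < n" for i
    using A O i by (simp add: scalar_prod_def atLeast0LessThan)
  have R: "row A i \<bullet> (\<Omega> *\<^sub>v row A i) = (\<Sum>l<n. A $$ (i, l) * (\<Sum>j<n. \<Omega> $$ (l, j) * A $$ (i, j)))"
    if i: "i < n" for i
    using A O i by (simp add: scalar_prod_def atLeast0LessThan)
  have "mtrace (A * \<Omega> * transpose_mat A) = (\<Sum>i<n. (A * \<Omega> * transpose_mat A) $$ (i, i))"
    using A by (simp add: mtrace_def)
  also have "\<dots> = (\<Sum>i<n. row A i \<bullet> (\<Omega> *\<^sub>v row A i))"
    by (intro sum.cong refl) (simp add: L R)
  finally show ?thesis .
qed

lemma mtrace_AAT:
  fixes A :: "real mat"
  assumes A: "A \<in> carrier_mat n n"
  shows "mtrace (A * transpose_mat A) = (\<Sum>i<n. row A i \<bullet> row A i)"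
proof -
  have "mtrace (A * 1\<^sub>m n * transpose_mat A) = (\<Sum>i<n. row A i \<bullet> (1\<^sub>m n *\<^sub>v row A i))"
    by (rule V_rows[OF A one_carrier_mat])
  moreover have "row A i \<in> carrier_vec n" for i using A row_carrier[of A i] by simp
  ultimately show ?thesis using A by simp
qed

locale proj_setting =
  fixes n q :: nat and P :: "nat \<Rightarrow> real mat" and \<nu> :: "nat \<Rightarrow> nat"
    and \<Omega> :: "real mat" and c1 c2 :: real
  assumes Pc: "\<And>m. m \<le> q \<Longrightarrow> P m \<in> carrier_mat n n"
    and PT: "\<And>m. m \<le> q \<Longrightarrow> transpose_mat (P m) = P m"
    and Ptr: "\<And>m. m \<le> q \<Longrightarrow> mtrace (P m) = real (\<nu> m)"
    and PP1: "\<And>k m. k \<le> m \<Longrightarrow> m \<le> q \<Longrightarrow> P m * P k = P k"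
    and PP2: "\<And>k m. k \<le> m \<Longrightarrow> m \<le> q \<Longrightarrow> P k * P m = P k"
    and Oc: "\<Omega> \<in> carrier_mat n n"
    and OT: "transpose_mat \<Omega> = \<Omega>"
    and c1: "0 < c1"
    and Ob: "\<And>x. x \<in> carrier_vec n \<Longrightarrow> c1 * (x \<bullet> x) \<le> x \<bullet> (\<Omega> *\<^sub>v x) \<and> x \<bullet> (\<Omega> *\<^sub>v x) \<le> c2 * (x \<bullet> x)"
begin

definition Vr :: "real mat \<Rightarrow> real" where "Vr A = mtrace (A * \<Omega> * transpose_mat A)"

lemma V_bounds:
  assumes A: "A \<in> carrier_mat n n"
  shows "c1 * mtrace (A * transpose_mat A) \<le> Vr A" "Vr A \<le> c2 * mtrace (A * transpose_mat A)"
proof -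
  have r: "row A i \<in> carrier_vec n" for i using A row_carrier[of A i] by simp
  show "c1 * mtrace (A * transpose_mat A) \<le> Vr A"
    unfolding Vr_def V_rows[OF A Oc] mtrace_AAT[OF A] sum_distrib_left
    by (intro sum_mono) (use Ob[OF r] in blast)
  show "Vr A \<le> c2 * mtrace (A * transpose_mat A)"
    unfolding Vr_def V_rows[OF A Oc] mtrace_AAT[OF A] sum_distrib_left
    by (intro sum_mono) (use Ob[OF r] in blast)
qed

lemma V_nonneg: assumes A: "A \<in> carrier_mat n n" shows "0 \<le> Vr A"
proof -
  have "0 \<le> mtrace (A * transpose_mat A)" unfolding mtrace_AAT[OF A]
  proof (intro sum_nonneg)
    fix i have "row A i \<in> carrier_vec n" using A row_carrier[of A i] by simp
    thus "0 \<le> row A i \<bullet> row A i" by (simp add: sqn_vec sum_nonneg)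
  qed
  thus ?thesis using V_bounds(1)[OF A] c1 by (meson mult_nonneg_nonneg less_imp_le order_trans)
qed

lemma symidem:
  assumes S: "S \<in> carrier_mat n n" and ST: "transpose_mat S = S" and SS: "S * S = S"
  shows "Vr S = mtrace (S * \<Omega>)" "mtrace (S * transpose_mat S) = mtrace S"
proof -
  have "Vr S = mtrace ((S * \<Omega>) * S)" unfolding Vr_def ST ..
  also have "\<dots> = mtrace (S * (S * \<Omega>))" by (rule mtrace_comm) (use S Oc in auto)
  also have "S * (S * \<Omega>) = S * \<Omega>" using assoc_mult_mat[OF S S Oc] SS by simp
  finally show "Vr S = mtrace (S * \<Omega>)" .
  show "mtrace (S * transpose_mat S) = mtrace S" using ST SS by simp
qed

lemma D_props:
  assumes km: "k \<le> m" and mq: "m \<le> q"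
  shows "P m - P k \<in> carrier_mat n n" "transpose_mat (P m - P k) = P m - P k"
    "(P m - P k) * (P m - P k) = P m - P k"
proof -
  have kq: "k \<le> q" using km mq by simp
  note c = Pc[OF mq] Pc[OF kq]
  show "P m - P k \<in> carrier_mat n n" using c by (simp add: minus_carrier_mat)
  show "transpose_mat (P m - P k) = P m - P k" using transpose_minus[OF c] PT mq kq by simp
  have mm: "P m * P m = P m" using PP1[OF order_refl mq] .
  have kk: "P k * P k = P k" using PP1[OF order_refl kq] .
  have "(P m - P k) * (P m - P k) = P m * (P m - P k) - P k * (P m - P k)"
    by (rule minus_mult_distrib_mat) (use c in auto)
  also have "P m * (P m - P k) = P m * P m - P m * P k" by (rule mult_minus_distrib_mat) (use c in auto)
  also have "P k * (P m - P k) = P k * P m - P k * P k" by (rule mult_minus_distrib_mat) (use c in auto)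
  finally show "(P m - P k) * (P m - P k) = P m - P k"
    unfolding mm kk PP1[OF km mq] PP2[OF km mq] using c by (intro eq_matI) auto
qed

lemma V_diff:
  assumes km: "k \<le> m" and mq: "m \<le> q"
  shows "Vr (P m - P k) = Vr (P m) - Vr (P k)"
    "mtrace ((P m - P k) * transpose_mat (P m - P k)) = real (\<nu> m) - real (\<nu> k)"
    "Vr (P m - P k) = mtrace ((P m - P k) * \<Omega>)"
proof -
  have kq: "k \<le> q" using km mq by simp
  note c = Pc[OF mq] Pc[OF kq]
  note D = D_props[OF km mq]
  have sm: "Vr (P m) = mtrace (P m * \<Omega>)"
    using symidem(1)[OF Pc[OF mq] PT[OF mq] PP1[OF order_refl mq]] .
  have sk: "Vr (P k) = mtrace (P k * \<Omega>)"
    using symidem(1)[OF Pc[OF kq] PT[OF kq] PP1[OF order_refl kq]] .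
  show sd: "Vr (P m - P k) = mtrace ((P m - P k) * \<Omega>)" using symidem(1)[OF D] .
  also have "(P m - P k) * \<Omega> = P m * \<Omega> - P k * \<Omega>"
    by (rule minus_mult_distrib_mat) (use c Oc in auto)
  also have "mtrace \<dots> = mtrace (P m * \<Omega>) - mtrace (P k * \<Omega>)"
    by (rule mtrace_minus) (use c Oc in auto)
  finally show "Vr (P m - P k) = Vr (P m) - Vr (P k)" using sm sk by simp
  show "mtrace ((P m - P k) * transpose_mat (P m - P k)) = real (\<nu> m) - real (\<nu> k)"
    using symidem(2)[OF D] mtrace_minus[OF c] Ptr[OF mq] Ptr[OF kq] by simp
qed

lemma V_diff_bounds:
  assumes km: "k \<le> m" and mq: "m \<le> q"
  shows "c1 * (real (\<nu> m) - real (\<nu> k)) \<le> Vr (P m) - Vr (P k)"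
    "Vr (P m) - Vr (P k) \<le> c2 * (real (\<nu> m) - real (\<nu> k))"
  using V_bounds[OF D_props(1)[OF km mq]] V_diff[OF km mq] by auto

lemma V_single:
  assumes mq: "m \<le> q"
  shows "Vr (P m) \<le> c2 * real (\<nu> m)"
proof -
  have "Vr (P m) \<le> c2 * mtrace (P m * transpose_mat (P m))" by (rule V_bounds(2)[OF Pc[OF mq]])
  also have "mtrace (P m * transpose_mat (P m)) = real (\<nu> m)"
    using symidem(2)[OF Pc[OF mq] PT[OF mq] PP1[OF order_refl mq]] Ptr[OF mq] by simp
  finally show ?thesis .
qed

end

context proj_setting
begin

definition Avg :: "nat \<Rightarrow> (nat \<Rightarrow> real) \<Rightarrow> real mat" where
  "Avg M w = mat n n (\<lambda>(i, j). \<Sum>m\<in>{1..M}. w m * P m $$ (i, j))"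

lemma Avg_carrier: "Avg M w \<in> carrier_mat n n" by (simp add: Avg_def)

lemma PM_Avg:
  assumes Mq: "M \<le> q"
  shows "P M * Avg M w = Avg M w"
proof (rule eq_matI)
  have PM: "P M \<in> carrier_mat n n" using Pc[OF Mq] .
  fix i j assume "i < dim_row (Avg M w)" "j < dim_col (Avg M w)"
  hence ij: "i < n" "j < n" by (auto simp: Avg_def)
  have "(P M * Avg M w) $$ (i, j) = (\<Sum>l<n. P M $$ (i, l) * (\<Sum>m\<in>{1..M}. w m * P m $$ (l, j)))"
    using PM ij by (simp add: Avg_def scalar_prod_def atLeast0LessThan)
  also have "\<dots> = (\<Sum>l<n. \<Sum>m\<in>{1..M}. w m * (P M $$ (i, l) * P m $$ (l, j)))"
    by (simp add: sum_distrib_left mult.left_commute)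
  also have "\<dots> = (\<Sum>m\<in>{1..M}. \<Sum>l<n. w m * (P M $$ (i, l) * P m $$ (l, j)))" by (rule sum.swap)
  also have "\<dots> = (\<Sum>m\<in>{1..M}. w m * (P M * P m) $$ (i, j))"
  proof (intro sum.cong refl)
    fix m assume "m \<in> {1..M}"
    hence mq: "m \<le> q" using Mq by simp
    have "(P M * P m) $$ (i, j) = (\<Sum>l<n. P M $$ (i, l) * P m $$ (l, j))"
      using PM Pc[OF mq] ij by (simp add: scalar_prod_def atLeast0LessThan)
    thus "(\<Sum>l<n. w m * (P M $$ (i, l) * P m $$ (l, j))) = w m * (P M * P m) $$ (i, j)"
      by (simp add: sum_distrib_left)
  qed
  also have "\<dots> = (\<Sum>m\<in>{1..M}. w m * P m $$ (i, j))"
    by (intro sum.cong refl) (simp add: PP1 Mq)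
  also have "\<dots> = Avg M w $$ (i, j)" using ij by (simp add: Avg_def)
  finally show "(P M * Avg M w) $$ (i, j) = Avg M w $$ (i, j)" .
qed (use Pc[OF Mq] in \<open>auto simp: Avg_def\<close>)

lemma bias_lower:
  assumes Mq: "M \<le> q" and mu: "\<mu> \<in> carrier_vec n"
  shows "sqnorm (P M *\<^sub>v \<mu> - \<mu>) \<le> lin_risk (Avg M w) \<mu> \<Omega>"
proof -
  define A where "A = Avg M w"
  have A: "A \<in> carrier_mat n n" by (simp add: A_def Avg_carrier)
  have PM: "P M \<in> carrier_mat n n" using Pc[OF Mq] .
  have PA: "P M * A = A" unfolding A_def by (rule PM_Avg[OF Mq])
  define z where "z = A *\<^sub>v \<mu> - \<mu>"
  define v where "v = P M *\<^sub>v \<mu> - \<mu>"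
  define u where "u = P M *\<^sub>v z"
  have zc: "z \<in> carrier_vec n" and vc: "v \<in> carrier_vec n" and uc: "u \<in> carrier_vec n"
    using A PM mu by (auto simp: z_def v_def u_def)
  have u_eq: "u = A *\<^sub>v \<mu> - P M *\<^sub>v \<mu>"
  proof -
    have "u = P M *\<^sub>v (A *\<^sub>v \<mu>) - P M *\<^sub>v \<mu>"
      unfolding u_def z_def by (rule mult_minus_distrib_mat_vec) (use A PM mu in auto)
    also have "P M *\<^sub>v (A *\<^sub>v \<mu>) = A *\<^sub>v \<mu>"
      using assoc_mult_mat_vec[OF PM A mu] PA by simp
    finally show ?thesis .
  qed
  have zuv: "z = u + v" unfolding z_def u_eq v_def
    by (rule eq_vecI) (use A PM mu in auto)
  have Pv: "P M *\<^sub>v v = 0\<^sub>v n"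
  proof -
    have "P M *\<^sub>v v = P M *\<^sub>v (P M *\<^sub>v \<mu>) - P M *\<^sub>v \<mu>"
      unfolding v_def by (rule mult_minus_distrib_mat_vec) (use PM mu in auto)
    also have "P M *\<^sub>v (P M *\<^sub>v \<mu>) = P M *\<^sub>v \<mu>"
      using assoc_mult_mat_vec[OF PM PM mu] PP1[OF order_refl Mq] by simp
    finally have e: "P M *\<^sub>v v = P M *\<^sub>v \<mu> - P M *\<^sub>v \<mu>" .
    show ?thesis unfolding e by (rule eq_vecI) (use PM mu in auto)
  qed
  have uv: "u \<bullet> v = 0"
  proof -
    have "u \<bullet> v = (transpose_mat (P M) *\<^sub>v z) \<bullet> v" unfolding u_def PT[OF Mq] ..
    also have "\<dots> = z \<bullet> (P M *\<^sub>v v)" by (rule transpose_vec_mult_scalar[OF PM vc zc])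
    also have "\<dots> = 0" unfolding Pv using zc by simp
    finally show ?thesis .
  qed
  have "z \<bullet> z = u \<bullet> u + 2 * (u \<bullet> v) + v \<bullet> v"
  proof -
    have "z \<bullet> z = u \<bullet> (u + v) + v \<bullet> (u + v)" unfolding zuv
      by (rule add_scalar_prod_distrib) (use uc vc in auto)
    also have "u \<bullet> (u + v) = u \<bullet> u + u \<bullet> v" by (rule scalar_prod_add_distrib) (use uc vc in auto)
    also have "v \<bullet> (u + v) = v \<bullet> u + v \<bullet> v" by (rule scalar_prod_add_distrib) (use uc vc in auto)
    also have "v \<bullet> u = u \<bullet> v" by (rule comm_scalar_prod) (use uc vc in auto)
    finally show ?thesis by simp
  qed
  moreover have "0 \<le> u \<bullet> u" using uc by (simp add: sqn_vec sum_nonneg)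
  ultimately have "v \<bullet> v \<le> z \<bullet> z" using uv by simp
  moreover have "0 \<le> Vr A" by (rule V_nonneg[OF A])
  ultimately show ?thesis unfolding lin_risk_def sqnorm_def Vr_def A_def[symmetric] z_def v_def
    by simp
qed

lemma Avg_indicator:
  assumes m: "1 \<le> m" "m \<le> M" and Mq: "M \<le> q"
  shows "Avg M (\<lambda>j. if j = m then 1 else 0) = P m"
proof -
  have Pm: "P m \<in> carrier_mat n n" using Pc m Mq by simp
  show ?thesis
proof (rule eq_matI)
  fix i j assume "i < dim_row (P m)" "j < dim_col (P m)"
  hence ij: "i < n" "j < n" using Pm by auto
  have "(\<Sum>k\<in>{1..M}. (if k = m then 1 else 0) * P k $$ (i, j)) = P m $$ (i, j)"
  proof -
    have "(\<Sum>k\<in>{1..M}. (if k = m then 1 else 0) * P k $$ (i, j))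
        = (\<Sum>k\<in>{1..M}. if k = m then P m $$ (i, j) else 0)" by (rule sum.cong) auto
    also have "\<dots> = P m $$ (i, j)" using m by simp
    finally show ?thesis .
  qed
  thus "Avg M (\<lambda>j. if j = m then 1 else 0) $$ (i, j) = P m $$ (i, j)"
    using ij by (simp add: Avg_def)
qed (use Pm in \<open>auto simp: Avg_def\<close>)
qed

lemma theta_zero:
  assumes j: "1 \<le> j" "j \<le> q" and nu: "\<nu> (j - 1) < \<nu> j" and n: "0 < n"
    and mu: "\<mu> \<in> carrier_vec n"
    and th: "(\<mu> \<bullet> ((P j - P (j - 1)) *\<^sub>v \<mu>) / real n) / mtrace ((P j - P (j - 1)) * \<Omega>) \<le> 0"
  shows "P j *\<^sub>v \<mu> = P (j - 1) *\<^sub>v \<mu>"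
proof -
  have km: "j - 1 \<le> j" by simp
  define D where "D = P j - P (j - 1)"
  have Pj: "P j \<in> carrier_mat n n" "P (j - 1) \<in> carrier_mat n n" using Pc j by auto
  note Dp = D_props[OF km j(2), folded D_def]
  have den: "mtrace (D * \<Omega>) > 0"
  proof -
    have "mtrace (D * \<Omega>) = Vr (P j) - Vr (P (j - 1))"
      using V_diff[OF km j(2)] unfolding D_def by simp
    moreover have "c1 * (real (\<nu> j) - real (\<nu> (j - 1))) \<le> Vr (P j) - Vr (P (j - 1))"
      by (rule V_diff_bounds(1)[OF km j(2)])
    moreover have "c1 * (real (\<nu> j) - real (\<nu> (j - 1))) > 0" using c1 nu by simp
    ultimately show ?thesis by linarith
  qed
  have Dmu: "D *\<^sub>v \<mu> \<in> carrier_vec n" using Dp(1) mu by simp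
  have num: "\<mu> \<bullet> (D *\<^sub>v \<mu>) = (D *\<^sub>v \<mu>) \<bullet> (D *\<^sub>v \<mu>)"
  proof -
    have "\<mu> \<bullet> (D *\<^sub>v \<mu>) = \<mu> \<bullet> (D *\<^sub>v (D *\<^sub>v \<mu>))"
      using assoc_mult_mat_vec[OF Dp(1) Dp(1) mu] Dp(3) by simp
    also have "\<dots> = (transpose_mat D *\<^sub>v \<mu>) \<bullet> (D *\<^sub>v \<mu>)"
      by (rule transpose_vec_mult_scalar[OF Dp(1) Dmu mu, symmetric])
    finally show ?thesis using Dp(2) by simp
  qed
  define a where "a = \<mu> \<bullet> (D *\<^sub>v \<mu>)"
  have th': "(a / real n) / mtrace (D * \<Omega>) \<le> 0" using th unfolding D_def[symmetric] a_def .
  have "a / real n = ((a / real n) / mtrace (D * \<Omega>)) * mtrace (D * \<Omega>)" using den by simp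
  also have "\<dots> \<le> 0" using th' den by (intro mult_nonpos_nonneg) auto
  finally have an: "a / real n \<le> 0" .
  have "a = (a / real n) * real n" using n by simp
  also have "\<dots> \<le> 0" using an by (intro mult_nonpos_nonneg) auto
  finally have "\<mu> \<bullet> (D *\<^sub>v \<mu>) \<le> 0" unfolding a_def .
  moreover have "0 \<le> (D *\<^sub>v \<mu>) \<bullet> (D *\<^sub>v \<mu>)" using Dmu by (simp add: sqn_vec sum_nonneg)
  ultimately have "(D *\<^sub>v \<mu>) \<bullet> (D *\<^sub>v \<mu>) = 0" using num by simp
  hence "D *\<^sub>v \<mu> = 0\<^sub>v n" by (rule vec_self_zero[OF Dmu])
  moreover have "D *\<^sub>v \<mu> = P j *\<^sub>v \<mu> - P (j - 1) *\<^sub>v \<mu>"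
    unfolding D_def by (rule minus_mult_distrib_mat_vec) (use Pj mu in auto)
  ultimately have z: "P j *\<^sub>v \<mu> - P (j - 1) *\<^sub>v \<mu> = 0\<^sub>v n" by simp
  show ?thesis
  proof (rule eq_vecI)
    fix i assume "i < dim_vec (P (j - 1) *\<^sub>v \<mu>)"
    hence i: "i < n" using Pj by simp
    have "(P j *\<^sub>v \<mu> - P (j - 1) *\<^sub>v \<mu>) $ i = 0" using z i by simp
    thus "(P j *\<^sub>v \<mu>) $ i = (P (j - 1) *\<^sub>v \<mu>) $ i" using i Pj by simp
  qed (use Pj in simp)
qed

end

context proj_setting
begin

lemma core:
  fixes \<mu> :: "real vec" and d s M :: nat
  assumes n: "0 < n" and mu: "\<mu> \<in> carrier_vec n"
    and mono: "\<forall>m<q. \<nu> m < \<nu> (Suc m)"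
    and d: "1 \<le> d" "d \<le> q"
    and dth: "\<And>j. d < j \<Longrightarrow> j \<le> q \<Longrightarrow>
        (\<mu> \<bullet> ((P j - P (j - 1)) *\<^sub>v \<mu>) / real n) / mtrace ((P j - P (j - 1)) * \<Omega>) \<le> 0"
    and s: "1 \<le> s" "s \<le> q"
    and smin: "\<And>m. 1 \<le> m \<Longrightarrow> m \<le> q \<Longrightarrow> m \<noteq> s \<Longrightarrow>
        lin_risk (P s) \<mu> \<Omega> < lin_risk (P m) \<mu> \<Omega>"
    and M: "1 \<le> M" "M < s"
  shows "s \<le> d"
    "c1 * (real s - real M) \<le> sqnorm (P M *\<^sub>v \<mu> - \<mu>)"
    "lin_risk (P M) \<mu> \<Omega> \<le> sqnorm (P M *\<^sub>v \<mu> - \<mu>) + c2 * real (\<nu> M)"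
proof -
  have R: "lin_risk (P m) \<mu> \<Omega> = sqnorm (P m *\<^sub>v \<mu> - \<mu>) + Vr (P m)" for m
    by (simp add: lin_risk_def Vr_def)
  have sqn: "0 \<le> sqnorm v" if "v \<in> carrier_vec n" for v
    using that by (simp add: sqnorm_def sqn_vec sum_nonneg)
  show sd: "s \<le> d"
  proof (rule ccontr)
    assume "\<not> s \<le> d"
    hence ds: "d < s" by simp
    have eq: "P j *\<^sub>v \<mu> = P d *\<^sub>v \<mu>" if "d \<le> j" "j \<le> s" for j
      using that
    proof (induction j)
      case 0 thus ?case by simp
    next
      case (Suc j)
      show ?case
      proof (cases "d = Suc j")
        case True thus ?thesis by simp
      next
        case False
        hence dj: "d \<le> j" using Suc by simp
        have jq: "Suc j \<le> q" using Suc s by simp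
        have "P (Suc j) *\<^sub>v \<mu> = P (Suc j - 1) *\<^sub>v \<mu>"
          by (rule theta_zero[OF _ jq _ n mu]) (use mono jq dth[of "Suc j"] dj in auto)
        thus ?thesis using Suc dj by simp
      qed
    qed
    have "c1 * (real (\<nu> s) - real (\<nu> d)) \<le> Vr (P s) - Vr (P d)"
      by (rule V_diff_bounds(1)) (use ds s in auto)
    moreover have "\<nu> d + (s - d) \<le> \<nu> s" by (rule nu_mono[OF mono]) (use ds s in auto)
    hence "real (\<nu> s) - real (\<nu> d) > 0" using ds by simp
    ultimately have "Vr (P d) < Vr (P s)" using c1 by (smt (verit) mult_pos_pos)
    hence "lin_risk (P d) \<mu> \<Omega> < lin_risk (P s) \<mu> \<Omega>" unfolding R using eq[of s] ds by simp
    moreover have "lin_risk (P s) \<mu> \<Omega> < lin_risk (P d) \<mu> \<Omega>" using smin d ds by simp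
    ultimately show False by simp
  qed
  have Mq: "M \<le> q" using M s by simp
  have PMc: "P M *\<^sub>v \<mu> - \<mu> \<in> carrier_vec n" using Pc[OF Mq] mu by simp
  have Psc: "P s *\<^sub>v \<mu> - \<mu> \<in> carrier_vec n" using Pc[OF s(2)] mu by simp
  have "lin_risk (P s) \<mu> \<Omega> < lin_risk (P M) \<mu> \<Omega>" using smin M Mq by simp
  hence "Vr (P s) < sqnorm (P M *\<^sub>v \<mu> - \<mu>) + Vr (P M)" unfolding R using sqn[OF Psc] by simp
  moreover have "c1 * (real (\<nu> s) - real (\<nu> M)) \<le> Vr (P s) - Vr (P M)"
    by (rule V_diff_bounds(1)) (use M s in auto)
  moreover have "\<nu> M + (s - M) \<le> \<nu> s" by (rule nu_mono[OF mono]) (use M s in auto)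
  hence "real s - real M \<le> real (\<nu> s) - real (\<nu> M)" using M by linarith
  hence "c1 * (real s - real M) \<le> c1 * (real (\<nu> s) - real (\<nu> M))" using c1 by simp
  ultimately show "c1 * (real s - real M) \<le> sqnorm (P M *\<^sub>v \<mu> - \<mu>)" by linarith
  show "lin_risk (P M) \<mu> \<Omega> \<le> sqnorm (P M *\<^sub>v \<mu> - \<mu>) + c2 * real (\<nu> M)"
    unfolding R using V_single[OF Mq] by simp
qed

end

lemma ratio_bound:
  fixes T a b B c1 Mr sr :: real
  assumes c1: "0 < c1" and B: "0 \<le> B" and Ta: "T \<le> a" and ab: "a \<le> b" and bT: "b \<le> T + B * Mr"
    and Tl: "c1 * (sr - Mr) \<le> T" and sp: "0 < sr" and M0: "0 \<le> Mr" and x: "Mr / sr < 1/2"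
  shows "\<bar>a / b - 1\<bar> \<le> (2 * B / c1) * (Mr / sr)"
proof -
  have Ms: "Mr < sr / 2" using x sp by (simp add: divide_less_eq)
  have "c1 * (sr / 2) \<le> c1 * (sr - Mr)" using c1 Ms by simp
  hence Tp: "c1 * (sr / 2) \<le> T" using Tl by linarith
  have Tpos: "0 < T" using Tp c1 sp by (smt (verit) half_gt_zero mult_pos_pos)
  have bp: "0 < b" using Tpos Ta ab by linarith
  have r1: "a / b \<le> 1" using ab bp by simp
  have "1 - a / b = (b - a) / b" using bp by (simp add: field_simps)
  also have "\<dots> \<le> (B * Mr) / b" using bT Ta bp by (intro divide_right_mono) auto
  also have "\<dots> \<le> (B * Mr) / T" using B M0 Tpos bp Ta ab
    by (intro divide_left_mono) (auto intro: mult_nonneg_nonneg)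
  also have "\<dots> \<le> (B * Mr) / (c1 * (sr / 2))"
  proof (rule divide_left_mono)
    have csp: "0 < c1 * (sr / 2)" using c1 sp by simp
    show "0 < T * (c1 * (sr / 2))" using Tpos csp by (rule mult_pos_pos)
  qed (use B M0 Tp in \<open>auto intro: mult_nonneg_nonneg\<close>)
  also have "\<dots> = (2 * B / c1) * (Mr / sr)" using c1 sp by (simp add: field_simps)
  finally show ?thesis using r1 by simp
qed

lemma per_n:
  fixes X :: "real mat" and \<mu> :: "real vec" and \<Omega> :: "real mat" and p q M n :: nat
    and \<nu> :: "nat \<Rightarrow> nat" and mstar s :: nat and wstar :: "nat \<Rightarrow> real" and c1 c2 V :: real
  assumes X: "X \<in> carrier_mat n p" and muc: "\<mu> \<in> carrier_vec n"
    and O: "\<Omega> \<in> carrier_mat n n" and OT: "transpose_mat \<Omega> = \<Omega>"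
    and nu0: "\<nu> 0 = 0" and mono: "\<forall>m<q. \<nu> m < \<nu> (Suc m)" and nuq: "\<nu> q = p"
    and rk: "\<forall>m\<in>{1..q}. vec_space.rank n (first_cols X (\<nu> m)) = \<nu> m"
    and Mq: "2 \<le> M" "M \<le> q"
    and ms: "mstar \<in> {1..M}"
    and msmin: "\<forall>m\<in>{1..M}. m \<noteq> mstar \<longrightarrow> risk_model X \<nu> \<mu> \<Omega> mstar < risk_model X \<nu> \<mu> \<Omega> m"
    and s: "s \<in> {1..q}"
    and smin: "\<forall>m\<in>{1..q}. m \<noteq> s \<longrightarrow> risk_model X \<nu> \<mu> \<Omega> s < risk_model X \<nu> \<mu> \<Omega> m"
    and ws: "wstar \<in> weight_set M"
    and wsmin: "\<forall>w\<in>weight_set M. w \<noteq> wstar \<longrightarrow> risk_weight X \<nu> M \<mu> \<Omega> wstar < risk_weight X \<nu> M \<mu> \<Omega> w"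
    and c: "0 < c1" "c1 \<le> c2" and ev: "\<forall>k. eigenvalue \<Omega> k \<longrightarrow> c1 < k \<and> k < c2"
    and V: "1 \<le> V" and A4: "\<forall>m\<in>{1..dn X \<nu> q \<mu> \<Omega>}. real (\<nu> m - \<nu> (m - 1)) \<le> V"
    and d1: "1 \<le> dn X \<nu> q \<mu> \<Omega>"
    and n: "0 < n" and x: "real M / real s < 1/2"
  shows "\<bar>risk_weight X \<nu> M \<mu> \<Omega> wstar / risk_model X \<nu> \<mu> \<Omega> mstar - 1\<bar>
           \<le> (2 * (c2 * V) / c1) * (real M / real s)"
proof -
  define P where "P = hat X \<nu>"
  note hs = hat_system[OF X nu0 mono nuq rk, folded P_def]
  interpret ps: proj_setting n q P \<nu> \<Omega> c1 c2
  proof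
    show "\<And>m. m \<le> q \<Longrightarrow> P m \<in> carrier_mat n n" using hs(1) by blast
    show "\<And>m. m \<le> q \<Longrightarrow> transpose_mat (P m) = P m" using hs(1) by blast
    show "\<And>m. m \<le> q \<Longrightarrow> mtrace (P m) = real (\<nu> m)" using hs(1) by blast
    show "\<And>k m. k \<le> m \<Longrightarrow> m \<le> q \<Longrightarrow> P m * P k = P k" using hs(2) by blast
    show "\<And>k m. k \<le> m \<Longrightarrow> m \<le> q \<Longrightarrow> P k * P m = P k" using hs(2) by blast
    show "\<Omega> \<in> carrier_mat n n" by (rule O)
    show "transpose_mat \<Omega> = \<Omega>" by (rule OT)
    show "0 < c1" by (rule c(1))
    show "\<And>x. x \<in> carrier_vec n \<Longrightarrow> c1 * (x \<bullet> x) \<le> x \<bullet> (\<Omega> *\<^sub>v x) \<and> x \<bullet> (\<Omega> *\<^sub>v x) \<le> c2 * (x \<bullet> x)"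
      using Omega_bounds[OF O OT n ev] by blast
  qed
  have dimX: "dim_row X = n" using X by simp
  have Rm: "risk_model X \<nu> \<mu> \<Omega> m = lin_risk (P m) \<mu> \<Omega>" for m
    by (simp add: risk_model_def P_def)
  have Rw: "risk_weight X \<nu> M \<mu> \<Omega> w = lin_risk (ps.Avg M w) \<mu> \<Omega>" for w
  proof -
    have "ps.Avg M w = mat n n (\<lambda>(i, j). \<Sum>m\<in>{1..M}. w m * P m $$ (i, j))" by (rule ps.Avg_def)
    thus ?thesis unfolding risk_weight_def avg_hat_def dimX P_def by simp
  qed
  have th: "theta X \<nu> \<mu> \<Omega> j = (\<mu> \<bullet> ((P j - P (j - 1)) *\<^sub>v \<mu>) / real n) / mtrace ((P j - P (j - 1)) * \<Omega>)" for j
    by (simp add: theta_def P_def dimX)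
  define d where "d = dn X \<nu> q \<mu> \<Omega>"
  define S where "S = {m\<in>{1..q}. theta X \<nu> \<mu> \<Omega> m > 0}"
  have dS: "d = (if S = {} then 0 else Max S)" unfolding d_def S_def dn_def Let_def ..
  have Sne: "S \<noteq> {}" using d1 dS unfolding d_def[symmetric] by auto
  have fS: "finite S" by (simp add: S_def)
  have dmax: "d = Max S" using dS Sne by simp
  have dinS: "d \<in> S" using Max_in[OF fS Sne] dmax by simp
  have dq: "1 \<le> d" "d \<le> q" using dinS by (auto simp: S_def)
  have dth: "(\<mu> \<bullet> ((P j - P (j - 1)) *\<^sub>v \<mu>) / real n) / mtrace ((P j - P (j - 1)) * \<Omega>) \<le> 0"
    if "d < j" "j \<le> q" for j
  proof (rule ccontr)
    assume "\<not> ?thesis"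
    hence "j \<in> S" using that dq by (auto simp: S_def th)
    hence "j \<le> d" using Max_ge[OF fS] dmax by simp
    thus False using that by simp
  qed
  have s1: "1 \<le> s" "s \<le> q" using s by auto
  have sp: "0 < real s" using s1 by simp
  have Ms: "M < s"
  proof -
    have "real M < real s / 2" using x sp by (simp add: divide_less_eq)
    thus ?thesis by linarith
  qed
  have M1: "1 \<le> M" using Mq by simp
  have smin': "lin_risk (P s) \<mu> \<Omega> < lin_risk (P m) \<mu> \<Omega>" if "1 \<le> m" "m \<le> q" "m \<noteq> s" for m
    using smin that by (simp add: Rm)
  note cr = ps.core[OF n muc mono dq dth s1 smin' M1 Ms]
  define T where "T = sqnorm (P M *\<^sub>v \<mu> - \<mu>)"
  have nuM: "real (\<nu> k) \<le> V * real k" if "k \<le> M" for k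
    using that
  proof (induction k)
    case 0 thus ?case using nu0 by simp
  next
    case (Suc k)
    have kq: "k < q" using Suc Mq by simp
    have lt: "\<nu> k < \<nu> (Suc k)" using mono kq by simp
    have "Suc k \<in> {1..d}" using Suc cr(1) Ms by simp
    hence "real (\<nu> (Suc k) - \<nu> k) \<le> V" using A4 unfolding d_def[symmetric] by fastforce
    moreover have "real (\<nu> (Suc k)) = real (\<nu> k) + real (\<nu> (Suc k) - \<nu> k)" using lt by simp
    moreover have "real (\<nu> k) \<le> V * real k" using Suc by simp
    moreover have "V * real (Suc k) = V * real k + V" by (simp add: distrib_left)
    ultimately show ?case by linarith
  qed
  have c2p: "0 \<le> c2" using c by simp
  have RMb: "lin_risk (P M) \<mu> \<Omega> \<le> T + (c2 * V) * real M"
  proof -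
    have "c2 * real (\<nu> M) \<le> c2 * (V * real M)" using nuM[OF order_refl] c2p by (rule mult_left_mono)
    thus ?thesis using cr(3) unfolding T_def by (simp add: mult.assoc)
  qed
  define e where "e = (\<lambda>j. if j = mstar then 1 else (0::real))"
  have ew: "e \<in> weight_set M" using ms by (auto simp: weight_set_def e_def)
  have Re: "risk_weight X \<nu> M \<mu> \<Omega> e = risk_model X \<nu> \<mu> \<Omega> mstar"
    unfolding Rw Rm e_def using ms Mq by (subst ps.Avg_indicator) auto
  have a1: "T \<le> risk_weight X \<nu> M \<mu> \<Omega> wstar"
    unfolding Rw T_def by (rule ps.bias_lower[OF Mq(2) muc])
  have a2: "risk_weight X \<nu> M \<mu> \<Omega> wstar \<le> risk_model X \<nu> \<mu> \<Omega> mstar"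
    using wsmin ew Re by (cases "e = wstar") (auto intro: less_imp_le)
  have a3: "risk_model X \<nu> \<mu> \<Omega> mstar \<le> risk_model X \<nu> \<mu> \<Omega> M"
    using msmin M1 by (cases "M = mstar") (auto intro: less_imp_le)
  have a4: "risk_model X \<nu> \<mu> \<Omega> M \<le> T + (c2 * V) * real M" using RMb by (simp add: Rm)
  have Tl: "c1 * (real s - real M) \<le> T" using cr(2) unfolding T_def .
  show ?thesis
    by (rule ratio_bound[OF c(1) _ a1 a2 _ Tl sp _ x])
       (use a3 a4 c2p V in \<open>auto intro: mult_nonneg_nonneg\<close>)
qed

theorem theorem3:
  fixes X :: "nat \<Rightarrow> real mat" and \<beta> \<mu> :: "nat \<Rightarrow> real vec" and \<Omega> :: "nat \<Rightarrow> real mat"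
    and p q M :: "nat \<Rightarrow> nat" and \<nu> :: "nat \<Rightarrow> nat \<Rightarrow> nat"
    and mstar mstar2 :: "nat \<Rightarrow> nat" and wstar :: "nat \<Rightarrow> nat \<Rightarrow> real"
  defines "R \<equiv> \<lambda>n m. risk_model (X n) (\<nu> n) (\<mu> n) (\<Omega> n) m"
    and "Rw \<equiv> \<lambda>n w. risk_weight (X n) (\<nu> n) (M n) (\<mu> n) (\<Omega> n) w"
    and "\<theta> \<equiv> \<lambda>n m. theta (X n) (\<nu> n) (\<mu> n) (\<Omega> n) m"
    and "d \<equiv> \<lambda>n. dn (X n) (\<nu> n) (q n) (\<mu> n) (\<Omega> n)"
  assumes design: "\<forall>\<^sub>F n in sequentially. X n \<in> carrier_mat n (p n) \<and> p n < n
                    \<and> \<beta> n \<in> carrier_vec (p n) \<and> \<mu> n = X n *\<^sub>v \<beta> n"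
    and cov: "\<forall>\<^sub>F n in sequentially. \<Omega> n \<in> carrier_mat n n \<and> transpose_mat (\<Omega> n) = \<Omega> n
                    \<and> (\<forall>x\<in>carrier_vec n. x \<noteq> 0\<^sub>v n \<longrightarrow> x \<bullet> (\<Omega> n *\<^sub>v x) > 0)"
    and nested: "\<forall>\<^sub>F n in sequentially. \<nu> n 0 = 0 \<and> (\<forall>m<q n. \<nu> n m < \<nu> n (Suc m))
                    \<and> \<nu> n (q n) = p n"
    and full_rank: "\<forall>\<^sub>F n in sequentially. \<forall>m\<in>{1..q n}.
                    vec_space.rank n (first_cols (X n) (\<nu> n m)) = \<nu> n m"
    and Mbounds: "\<forall>\<^sub>F n in sequentially. 2 \<le> M n \<and> M n \<le> q n"
    and mstar_min: "\<forall>\<^sub>F n in sequentially. mstar n \<in> {1..M n}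
                    \<and> (\<forall>m\<in>{1..M n}. m \<noteq> mstar n \<longrightarrow> R n (mstar n) < R n m)"
    and mstar2_min: "\<forall>\<^sub>F n in sequentially. mstar2 n \<in> {1..q n}
                    \<and> (\<forall>m\<in>{1..q n}. m \<noteq> mstar2 n \<longrightarrow> R n (mstar2 n) < R n m)"
    and wstar_min: "\<forall>\<^sub>F n in sequentially. wstar n \<in> weight_set (M n)
                    \<and> (\<forall>w\<in>weight_set (M n). w \<noteq> wstar n \<longrightarrow> Rw n (wstar n) < Rw n w)"
    and A1: "\<exists>C. \<forall>\<^sub>F n in sequentially. sqnorm (\<mu> n) / real n \<le> C"
    and A2: "\<exists>c1 c2. 0 < c1 \<and> c1 \<le> c2 \<and> (\<forall>\<^sub>F n in sequentially.
                    \<forall>k. eigenvalue (\<Omega> n) k \<longrightarrow> c1 < k \<and> k < c2)"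
    and A3: "\<forall>\<^sub>F n in sequentially. \<forall>m\<in>{1..q n}. \<forall>m'\<in>{1..q n}. m \<le> m' \<longrightarrow> \<theta> n m' \<le> \<theta> n m"
    and A4: "\<exists>V::real. 1 \<le> V \<and> (\<forall>\<^sub>F n in sequentially. \<forall>m\<in>{1..d n}. real (\<nu> n m - \<nu> n (m - 1)) \<le> V)"
    and A5: "\<forall>m::nat. 1 \<le> m \<longrightarrow> (\<exists>\<theta>bar>0. \<exists>K>0. \<forall>n\<ge>K. m \<le> d n \<and> \<theta> n m \<ge> \<theta>bar)"
    and A6: "\<forall>\<^sub>F n in sequentially. \<exists>m'\<in>{1..d n - 1}.
                    (\<forall>m\<in>{2..m'}. R n m < R n (m - 1))
                  \<and> (\<forall>m\<in>{m'<..d n}. R n m \<ge> R n (m - 1))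
                  \<and> R n (d n) > R n (d n - 1)"
    and M1: "(\<lambda>n. real (M n) / real (mstar2 n)) \<longlonglongrightarrow> 0"
  shows "(\<lambda>n. Rw n (wstar n) / R n (mstar n)) \<longlonglongrightarrow> 1"
proof -
  obtain c1 c2 where c: "0 < c1" "c1 \<le> c2"
    and evE: "\<forall>\<^sub>F n in sequentially. \<forall>k. eigenvalue (\<Omega> n) k \<longrightarrow> c1 < k \<and> k < c2"
    using A2 by blast
  obtain V :: real where V: "1 \<le> V"
    and A4E: "\<forall>\<^sub>F n in sequentially. \<forall>m\<in>{1..d n}. real (\<nu> n m - \<nu> n (m - 1)) \<le> V"
    using A4 by blast
  have dE: "\<forall>\<^sub>F n in sequentially. 1 \<le> d n"
  proof -
    obtain tb K where "\<forall>n\<ge>K. 1 \<le> d n \<and> \<theta> n 1 \<ge> tb"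
      using A5[rule_format, of 1] by auto
    thus ?thesis unfolding eventually_sequentially by blast
  qed
  have xE: "\<forall>\<^sub>F n in sequentially. real (M n) / real (mstar2 n) < 1/2"
    using order_tendstoD(2)[OF M1, of "1/2"] by simp
  have nE: "\<forall>\<^sub>F n in sequentially. 0 < n" by (rule eventually_gt_at_top)
  have desE: "\<forall>\<^sub>F n in sequentially. X n \<in> carrier_mat n (p n) \<and> \<mu> n \<in> carrier_vec n"
    using design by eventually_elim auto
  define K where "K = 2 * (c2 * V) / c1"
  have bound: "\<forall>\<^sub>F n in sequentially.
      \<bar>Rw n (wstar n) / R n (mstar n) - 1\<bar> \<le> K * (real (M n) / real (mstar2 n))"
  proof -
    have "\<forall>\<^sub>F n in sequentially.
       (X n \<in> carrier_mat n (p n) \<and> \<mu> n \<in> carrier_vec n)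
     \<and> (\<Omega> n \<in> carrier_mat n n \<and> transpose_mat (\<Omega> n) = \<Omega> n
                    \<and> (\<forall>x\<in>carrier_vec n. x \<noteq> 0\<^sub>v n \<longrightarrow> x \<bullet> (\<Omega> n *\<^sub>v x) > 0))
     \<and> (\<nu> n 0 = 0 \<and> (\<forall>m<q n. \<nu> n m < \<nu> n (Suc m)) \<and> \<nu> n (q n) = p n)
     \<and> (\<forall>m\<in>{1..q n}. vec_space.rank n (first_cols (X n) (\<nu> n m)) = \<nu> n m)
     \<and> (2 \<le> M n \<and> M n \<le> q n)
     \<and> (mstar n \<in> {1..M n} \<and> (\<forall>m\<in>{1..M n}. m \<noteq> mstar n \<longrightarrow> R n (mstar n) < R n m))
     \<and> (mstar2 n \<in> {1..q n} \<and> (\<forall>m\<in>{1..q n}. m \<noteq> mstar2 n \<longrightarrow> R n (mstar2 n) < R n m))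
     \<and> (wstar n \<in> weight_set (M n) \<and> (\<forall>w\<in>weight_set (M n). w \<noteq> wstar n \<longrightarrow> Rw n (wstar n) < Rw n w))
     \<and> (\<forall>k. eigenvalue (\<Omega> n) k \<longrightarrow> c1 < k \<and> k < c2)
     \<and> (\<forall>m\<in>{1..d n}. real (\<nu> n m - \<nu> n (m - 1)) \<le> V)
     \<and> 1 \<le> d n \<and> 0 < n \<and> real (M n) / real (mstar2 n) < 1/2"
      by (rule eventually_conj[OF desE eventually_conj[OF cov eventually_conj[OF nested
          eventually_conj[OF full_rank eventually_conj[OF Mbounds eventually_conj[OF mstar_min
          eventually_conj[OF mstar2_min eventually_conj[OF wstar_min eventually_conj[OF evE
          eventually_conj[OF A4E eventually_conj[OF dE eventually_conj[OF nE xE]]]]]]]]]]]])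
    thus ?thesis
    proof (rule eventually_mono)
      fix n assume H: "(X n \<in> carrier_mat n (p n) \<and> \<mu> n \<in> carrier_vec n)
     \<and> (\<Omega> n \<in> carrier_mat n n \<and> transpose_mat (\<Omega> n) = \<Omega> n
                    \<and> (\<forall>x\<in>carrier_vec n. x \<noteq> 0\<^sub>v n \<longrightarrow> x \<bullet> (\<Omega> n *\<^sub>v x) > 0))
     \<and> (\<nu> n 0 = 0 \<and> (\<forall>m<q n. \<nu> n m < \<nu> n (Suc m)) \<and> \<nu> n (q n) = p n)
     \<and> (\<forall>m\<in>{1..q n}. vec_space.rank n (first_cols (X n) (\<nu> n m)) = \<nu> n m)
     \<and> (2 \<le> M n \<and> M n \<le> q n)
     \<and> (mstar n \<in> {1..M n} \<and> (\<forall>m\<in>{1..M n}. m \<noteq> mstar n \<longrightarrow> R n (mstar n) < R n m))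
     \<and> (mstar2 n \<in> {1..q n} \<and> (\<forall>m\<in>{1..q n}. m \<noteq> mstar2 n \<longrightarrow> R n (mstar2 n) < R n m))
     \<and> (wstar n \<in> weight_set (M n) \<and> (\<forall>w\<in>weight_set (M n). w \<noteq> wstar n \<longrightarrow> Rw n (wstar n) < Rw n w))
     \<and> (\<forall>k. eigenvalue (\<Omega> n) k \<longrightarrow> c1 < k \<and> k < c2)
     \<and> (\<forall>m\<in>{1..d n}. real (\<nu> n m - \<nu> n (m - 1)) \<le> V)
     \<and> 1 \<le> d n \<and> 0 < n \<and> real (M n) / real (mstar2 n) < 1/2"
      show "\<bar>Rw n (wstar n) / R n (mstar n) - 1\<bar> \<le> K * (real (M n) / real (mstar2 n))"
        unfolding K_def R_def Rw_def
        by (rule per_n[of "X n" n "p n" "\<mu> n" "\<Omega> n" "\<nu> n" "q n" "M n" "mstar n" "mstar2 n" "wstar n" c1 c2 V])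
           (use H c V in \<open>simp_all add: R_def Rw_def d_def\<close>)
    qed
  qed
  have lim0: "(\<lambda>n. K * (real (M n) / real (mstar2 n))) \<longlonglongrightarrow> 0"
    using tendsto_mult[OF tendsto_const[of K] M1] by simp
  have lo: "(\<lambda>n. 1 - K * (real (M n) / real (mstar2 n))) \<longlonglongrightarrow> 1"
    using tendsto_diff[OF tendsto_const[of 1] lim0] by simp
  have hi: "(\<lambda>n. 1 + K * (real (M n) / real (mstar2 n))) \<longlonglongrightarrow> 1"
    using tendsto_add[OF tendsto_const[of 1] lim0] by simp
  show ?thesis
  proof (rule tendsto_sandwich[OF _ _ lo hi])
    show "\<forall>\<^sub>F n in sequentially. 1 - K * (real (M n) / real (mstar2 n)) \<le> Rw n (wstar n) / R n (mstar n)"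
      using bound by eventually_elim (simp add: abs_le_iff)
    show "\<forall>\<^sub>F n in sequentially. Rw n (wstar n) / R n (mstar n) \<le> 1 + K * (real (M n) / real (mstar2 n))"
      using bound by eventually_elim (simp add: abs_le_iff)
  qed
qed

end
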